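(* Let $L$ be a Lie algebra and $I$ an ideal of $L$ with $I\subseteq Z^{*}_2(L)$. Then the natural Lie homomorphism $\mathcal{M}^{(2)}(L)\to\mathcal{M}^{(2)}(L/I)$ is a monomorphism.
   Context: All Lie algebras are over a fixed field. For $L$ with free presentation $L\cong F/R$, the $2$-nilpotent multiplier is $\mathcal{M}^{(2)}(L)=(R\cap F^{3})/[[R,F],F]$ with $F^3=[[F,F],F]$; if $I\cong S/R$ with $R\subseteq S$, then $L/I\cong F/S$ and the natural homomorphism $\mathcal{M}^{(2)}(L)\to\mathcal{M}^{(2)}(L/I)=(S\cap F^3)/[[S,F],F]$ is induced by inclusion. With $\pi:F/[[R,F],F]\to F/R$ the natural epimorphism, $Z^{*}_2(L)=\pi\big(Z_2(F/[[R,F],F])\big)$, where $Z_2$ denotes the second term of the upper central series. *)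

theory Defs
  imports Main
begin

text \<open>
  Concrete model of the free Lie algebra over a field 'k on the generating set UNIV :: 'x set:
  the Lie subalgebra generated by the letters inside the free associative algebra
  k<X>, whose elements are represented as coefficient functions on words ('x list).
  Every free Lie algebra is isomorphic to one of these (free Lie algebras embed in
  their universal enveloping algebra, the tensor algebra).
\<close>

type_synonym ('x, 'k) ncp = "'x list \<Rightarrow> 'k"

definition pzero :: "('x, 'k::field) ncp" where
  "pzero = (\<lambda>w. 0)"

definition padd :: "('x, 'k::field) ncp \<Rightarrow> ('x, 'k) ncp \<Rightarrow> ('x, 'k) ncp" where
  "padd f g = (\<lambda>w. f w + g w)"

definition psub :: "('x, 'k::field) ncp \<Rightarrow> ('x, 'k) ncp \<Rightarrow> ('x, 'k) ncp" where
  "psub f g = (\<lambda>w. f w - g w)"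

definition psmult :: "'k::field \<Rightarrow> ('x, 'k) ncp \<Rightarrow> ('x, 'k) ncp" where
  "psmult c f = (\<lambda>w. c * f w)"

definition pmul :: "('x, 'k::field) ncp \<Rightarrow> ('x, 'k) ncp \<Rightarrow> ('x, 'k) ncp" where
  "pmul f g = (\<lambda>w. \<Sum>i\<in>{0..length w}. f (take i w) * g (drop i w))"

definition pbr :: "('x, 'k::field) ncp \<Rightarrow> ('x, 'k) ncp \<Rightarrow> ('x, 'k) ncp" where
  "pbr f g = psub (pmul f g) (pmul g f)"

definition pgen :: "'x \<Rightarrow> ('x, 'k::field) ncp" where
  "pgen x = (\<lambda>w. if w = [x] then 1 else 0)"

inductive_set free_lie :: "('x, 'k::field) ncp set" where
  gen: "pgen x \<in> free_lie"
| zero: "pzero \<in> free_lie"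
| add: "f \<in> free_lie \<Longrightarrow> g \<in> free_lie \<Longrightarrow> padd f g \<in> free_lie"
| smult: "f \<in> free_lie \<Longrightarrow> psmult c f \<in> free_lie"
| br: "f \<in> free_lie \<Longrightarrow> g \<in> free_lie \<Longrightarrow> pbr f g \<in> free_lie"

inductive_set lspan :: "('x, 'k::field) ncp set \<Rightarrow> ('x, 'k) ncp set" for A where
  base: "a \<in> A \<Longrightarrow> a \<in> lspan A"
| zero: "pzero \<in> lspan A"
| add: "f \<in> lspan A \<Longrightarrow> g \<in> lspan A \<Longrightarrow> padd f g \<in> lspan A"
| smult: "f \<in> lspan A \<Longrightarrow> psmult c f \<in> lspan A"

definition brs :: "('x, 'k::field) ncp set \<Rightarrow> ('x, 'k) ncp set \<Rightarrow> ('x, 'k) ncp set" where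
  "brs A B = lspan {pbr a b | a b. a \<in> A \<and> b \<in> B}"

definition is_ideal :: "('x, 'k::field) ncp set \<Rightarrow> ('x, 'k) ncp set \<Rightarrow> bool" where
  "is_ideal L I \<longleftrightarrow> I \<subseteq> L \<and> pzero \<in> I
     \<and> (\<forall>f\<in>I. \<forall>g\<in>I. padd f g \<in> I) \<and> (\<forall>c f. f \<in> I \<longrightarrow> psmult c f \<in> I)
     \<and> (\<forall>i\<in>I. \<forall>x\<in>L. pbr i x \<in> I)"

definition coset :: "('x, 'k::field) ncp set \<Rightarrow> ('x, 'k) ncp \<Rightarrow> ('x, 'k) ncp set" where
  "coset A x = {padd x a | a. a \<in> A}"

definition F3 :: "('x, 'k::field) ncp set" where
  "F3 = brs (brs free_lie free_lie) free_lie"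

definition RFF :: "('x, 'k::field) ncp set \<Rightarrow> ('x, 'k) ncp set" where
  "RFF R = brs (brs R free_lie) free_lie"

text \<open>Preimages in L of the upper central series terms of L/N:
  zeta1 L N / N = Z(L/N), zeta2 L N / N = Z_2(L/N) (i.e. zeta2/N / zeta1/N = Z((L/N)/(zeta1/N))).\<close>
definition zeta1 :: "('x, 'k::field) ncp set \<Rightarrow> ('x, 'k) ncp set \<Rightarrow> ('x, 'k) ncp set" where
  "zeta1 L N = {z \<in> L. \<forall>y\<in>L. pbr z y \<in> N}"

definition zeta2 :: "('x, 'k::field) ncp set \<Rightarrow> ('x, 'k) ncp set \<Rightarrow> ('x, 'k) ncp set" where
  "zeta2 L N = {z \<in> L. \<forall>y\<in>L. pbr z y \<in> zeta1 L N}"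

text \<open>For L = F/R: Z*_2(L) = pi(Z_2(F/[[R,F],F])), as a set of cosets of R.\<close>
definition Zstar2 :: "('x, 'k::field) ncp set \<Rightarrow> ('x, 'k) ncp set set" where
  "Zstar2 R = (\<lambda>t. coset R t) ` zeta2 free_lie (RFF R)"

text \<open>The 2-nilpotent multiplier M^(2)(F/R) = (R \<inter> F^3)/[[R,F],F], as a set of cosets.\<close>
definition M2 :: "('x, 'k::field) ncp set \<Rightarrow> ('x, 'k) ncp set set" where
  "M2 R = (\<lambda>x. coset (RFF R) x) ` (R \<inter> F3)"

text \<open>The natural map M^(2)(F/R) \<rightarrow> M^(2)(F/S) induced by inclusion (R \<subseteq> S):
  a coset x + [[R,F],F] is sent to its image x + [[S,F],F].\<close>
definition M2_map :: "('x, 'k::field) ncp set \<Rightarrow> ('x, 'k) ncp set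
    \<Rightarrow> ('x, 'k) ncp set \<Rightarrow> ('x, 'k) ncp set" where
  "M2_map R S C = (\<Union>x\<in>C. coset (RFF S) x)"

end

theory Submission
  imports Defs
begin

lemma pmul_add_left: "pmul (padd f g) h = padd (pmul f h) (pmul g h)"
  unfolding pmul_def padd_def by (rule ext) (simp add: distrib_right sum.distrib)
lemma pmul_add_right: "pmul h (padd f g) = padd (pmul h f) (pmul h g)"
  unfolding pmul_def padd_def by (rule ext) (simp add: distrib_left sum.distrib)
lemma pmul_zero_left: "pmul pzero h = pzero"
  unfolding pmul_def pzero_def by (rule ext) simp
lemma pmul_zero_right: "pmul h pzero = pzero"
  unfolding pmul_def pzero_def by (rule ext) simp
lemma pmul_sm_left: "pmul (psmult c f) h = psmult c (pmul f h)"
  unfolding pmul_def psmult_def by (rule ext) (simp add: sum_distrib_left mult.assoc)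
lemma pmul_sm_right: "pmul h (psmult c f) = psmult c (pmul h f)"
  unfolding pmul_def psmult_def by (rule ext) (simp add: sum_distrib_left algebra_simps)

lemma pbr_add_left: "pbr (padd f g) h = padd (pbr f h) (pbr g h)"
  unfolding pbr_def by (simp add: pmul_add_left pmul_add_right) (auto simp: psub_def padd_def)
lemma pbr_zero_left: "pbr pzero h = pzero"
  unfolding pbr_def by (simp add: pmul_zero_left pmul_zero_right) (simp add: psub_def pzero_def)
lemma pbr_sm_left: "pbr (psmult c f) h = psmult c (pbr f h)"
  unfolding pbr_def by (simp add: pmul_sm_left pmul_sm_right) (auto simp: psub_def psmult_def algebra_simps)

lemma lspan_sub: assumes "A \<subseteq> lspan B" "x \<in> lspan A" shows "x \<in> lspan B"
  using assms(2) by (induction rule: lspan.induct) (use assms(1) in \<open>auto intro: lspan.intros\<close>)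

lemma key:
  assumes "\<And>s. s \<in> S \<Longrightarrow> \<exists>t r. s = padd t r \<and> t \<in> zeta2 free_lie (RFF R) \<and> r \<in> R"
  shows "RFF S \<subseteq> RFF R"
proof
  fix x assume x: "x \<in> RFF S"
  have gen: "pbr a b \<in> RFF R" if a: "a \<in> brs S free_lie" and b: "b \<in> free_lie" for a b
    using a[unfolded brs_def]
  proof (induction rule: lspan.induct)
    case (base a)
    then obtain s f where a: "a = pbr s f" "s \<in> S" "f \<in> free_lie" by blast
    then obtain t r where tr: "s = padd t r" "t \<in> zeta2 free_lie (RFF R)" "r \<in> R"
      using assms by blast
    have 1: "pbr (pbr t f) b \<in> RFF R"
      using tr(2) a(3) b unfolding zeta2_def zeta1_def by blast
    have "pbr r f \<in> brs R free_lie" unfolding brs_def using tr(3) a(3)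
      by (blast intro: lspan.base)
    then have 2: "pbr (pbr r f) b \<in> RFF R" unfolding RFF_def brs_def using b
      by (blast intro: lspan.base)
    show ?case using 1 2 a(1) tr(1) unfolding RFF_def brs_def
      by (simp add: pbr_add_left lspan.add)
  next
    case zero then show ?case by (simp add: pbr_zero_left RFF_def brs_def lspan.zero)
  next
    case (add f g) then show ?case by (simp add: pbr_add_left RFF_def brs_def lspan.add)
  next
    case (smult f c) then show ?case by (simp add: pbr_sm_left RFF_def brs_def lspan.smult)
  qed
  show "x \<in> RFF R"
  proof -
    have "{pbr a b |a b. a \<in> brs S free_lie \<and> b \<in> free_lie} \<subseteq> lspan {pbr a b |a b. a \<in> brs R free_lie \<and> b \<in> free_lie}"
      using gen unfolding RFF_def brs_def[of "brs R free_lie"] by blast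
    then show ?thesis using x lspan_sub unfolding RFF_def brs_def[of "brs S free_lie"] brs_def[of "brs R free_lie"] by blast
  qed
qed

lemma padd_zero: "padd x pzero = x" by (simp add: padd_def pzero_def)
lemma padd_assoc: "padd (padd x a) b = padd x (padd a b)" by (simp add: padd_def add.assoc)

theorem theorem3p2:
  fixes R S :: "('x list \<Rightarrow> 'k::field) set"
  assumes "is_ideal free_lie R"
    and "is_ideal free_lie S"
    and "R \<subseteq> S"
    and "(\<lambda>s. coset R s) ` S \<subseteq> Zstar2 R"
  shows "inj_on (M2_map R S) (M2 R)"
proof -
  have R0: "pzero \<in> R" using assms(1) unfolding is_ideal_def by blast
  have sub: "RFF S \<subseteq> RFF R"
  proof (rule key)
    fix s assume s: "s \<in> S"
    then obtain t where t: "t \<in> zeta2 free_lie (RFF R)" "coset R s = coset R t"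
      using assms(4) unfolding Zstar2_def by blast
    have "s \<in> coset R s" unfolding coset_def using R0 by (auto intro!: exI[of _ pzero] simp: padd_zero)
    then show "\<exists>t r. s = padd t r \<and> t \<in> zeta2 free_lie (RFF R) \<and> r \<in> R"
      using t unfolding coset_def by blast
  qed
  have Z: "pzero \<in> RFF S" unfolding RFF_def brs_def by (rule lspan.zero)
  have id: "M2_map R S (coset (RFF R) x) = coset (RFF R) x" for x
  proof
    show "M2_map R S (coset (RFF R) x) \<subseteq> coset (RFF R) x"
    proof
      fix z assume "z \<in> M2_map R S (coset (RFF R) x)"
      then obtain a b where "a \<in> RFF R" "b \<in> RFF S" "z = padd (padd x a) b"
        unfolding M2_map_def coset_def by blast
      moreover have "padd a b \<in> RFF R" using calculation sub
        unfolding RFF_def brs_def by (blast intro: lspan.add)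
      ultimately show "z \<in> coset (RFF R) x" unfolding coset_def
        by (auto simp: padd_assoc)
    qed
    show "coset (RFF R) x \<subseteq> M2_map R S (coset (RFF R) x)"
    proof
      fix z assume z: "z \<in> coset (RFF R) x"
      have "z \<in> coset (RFF S) z" unfolding coset_def using Z
        by (auto intro!: exI[of _ pzero] simp: padd_zero)
      then show "z \<in> M2_map R S (coset (RFF R) x)" using z unfolding M2_map_def by blast
    qed
  qed
  show ?thesis unfolding inj_on_def M2_def using id by auto
qed

end
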